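(* Let $\alpha=(\alpha^+,0,\dots,0)\in[0,\infty)^n$ with $\alpha^+\in(0,\infty)^l$, $A=\Lambda_\alpha$, and let $\Gamma_1$ (resp. $\Gamma_0$) be a circle in $\mathbb{C}$ enclosing all entries of $\alpha^+$ but not $0$ (resp. enclosing $0$ but no entry of $\alpha^+$). For Hermitian $\tilde E$ (small enough that $\Lambda_\alpha+\tilde E$ has no eigenvalue on $\Gamma_0\cup\Gamma_1$) let $P_i(\tilde E)=\frac{1}{2\pi i}\int_{\Gamma_i}(zI-(\Lambda_\alpha+\tilde E))^{-1}\,dz$, $i=0,1$. Let $Z$ be Hermitian positive semi-definite with $\operatorname{Ran}Z\subseteq\operatorname{Ker}A$, and let $b>0$ be an upper bound for both $\|\tilde E\|$ and $\|Z\|$. Then $$P_1(\tilde E)ZP_0(\tilde E)=O(b^2),\qquad P_1(\tilde E)ZP_1(\tilde E)=O(b^3),$$ where the size of the errors is locally independent of $\alpha^+$.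
   Context: $\Lambda_v$ denotes the diagonal matrix with the vector $v$ on its diagonal; $\|\cdot\|$ is any matrix norm. *)

theory Defs
  imports "HOL-Analysis.Analysis" "HOL-Complex_Analysis.Complex_Analysis"
begin

text \<open>Complex n x n matrices are represented as complex^'n^'n, n = CARD('n).
  The norm on this type is the Frobenius norm (a matrix norm).\<close>

definition conj_transpose :: "complex^'n^'m \<Rightarrow> complex^'m^'n" where
  "conj_transpose M = (\<chi> i j. cnj (M $ j $ i))"

definition hermitian :: "complex^'n^'n \<Rightarrow> bool" where
  "hermitian M \<longleftrightarrow> conj_transpose M = M"

definition psd :: "complex^'n^'n \<Rightarrow> bool" where
  "psd M \<longleftrightarrow> hermitian M \<and>
     (\<forall>x::complex^'n. 0 \<le> Re (\<Sum>i\<in>UNIV. cnj (x $ i) * (M *v x) $ i))"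

definition diag_mat :: "real^'n \<Rightarrow> complex^'n^'n" where
  "diag_mat v = (\<chi> i j. if i = j then complex_of_real (v $ i) else 0)"

definition riesz_proj :: "complex \<Rightarrow> real \<Rightarrow> complex^'n^'n \<Rightarrow> complex^'n^'n" where
  "riesz_proj c r M = (\<chi> j k. (1 / (2 * pi * \<i>)) *
      contour_integral (circlepath c r) (\<lambda>z. matrix_inv (mat z - M) $ j $ k))"

end

theory Submission
  imports Defs
begin

no_notation fps_nth (infixl \<open>$\<close> 75)

type_synonym 'n cm = "complex^'n^'n"

lemma mm_add_r: "((A::'n::finite cm) + B) ** C = A ** C + B ** C"
  by (simp add: vec_eq_iff matrix_matrix_mult_def distrib_right sum.distrib)
lemma mm_diff_r: "((A::'n::finite cm) - B) ** C = A ** C - B ** C"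
  by (simp add: vec_eq_iff matrix_matrix_mult_def left_diff_distrib sum_subtractf)
lemma mm_add_l: "(A::'n::finite cm) ** (B + C) = A ** B + A ** C"
  by (simp add: vec_eq_iff matrix_matrix_mult_def distrib_left sum.distrib)
lemma mm_diff_l: "(A::'n::finite cm) ** (B - C) = A ** B - A ** C"
  by (simp add: vec_eq_iff matrix_matrix_mult_def right_diff_distrib sum_subtractf)
lemma mat_diff': "mat (a - b) = (mat a - mat b :: 'n::finite cm)"
  by (simp add: vec_eq_iff mat_def)

lemma vnorm_le_sum: "norm (x::'a::real_normed_vector^'n::finite) \<le> (\<Sum>i\<in>UNIV. norm (x$i))"
  unfolding norm_vec_def by (rule L2_set_le_sum) simp

lemma mnorm_entry: "cmod (A$i$j) \<le> norm (A::complex^'n::finite^'m::finite)"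
proof -
  have "norm (A$i$j) \<le> norm (A$i)" by (rule Finite_Cartesian_Product.norm_nth_le)
  also have "\<dots> \<le> norm A" by (rule Finite_Cartesian_Product.norm_nth_le)
  finally show ?thesis .
qed

lemma vnorm_bound: assumes "\<forall>i. cmod (x$i) \<le> c" shows "norm (x::complex^'n::finite) \<le> real CARD('n) * c"
proof -
  have "norm x \<le> (\<Sum>i\<in>UNIV. cmod (x$i))" by (rule vnorm_le_sum)
  also have "\<dots> \<le> (\<Sum>i\<in>(UNIV::'n set). c)" by (rule sum_mono) (use assms in blast)
  finally show ?thesis by simp
qed

lemma mnorm_bound: assumes "\<forall>i j. cmod (A$i$j) \<le> c" shows "norm (A::'n::finite cm) \<le> real CARD('n)^2 * c"
proof -
  have "norm A \<le> (\<Sum>i\<in>UNIV. norm (A$i))" by (rule vnorm_le_sum)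
  also have "\<dots> \<le> (\<Sum>i\<in>(UNIV::'n set). real CARD('n) * c)" by (rule sum_mono, rule vnorm_bound) (use assms in blast)
  finally show ?thesis by (simp add: power2_eq_square)
qed

lemma mnorm_mult: "norm ((A::'n::finite cm) ** (B::'n cm)) \<le> real CARD('n)^3 * norm A * norm B"
proof -
  have "cmod ((A ** B)$i$j) \<le> real CARD('n) * (norm A * norm B)" for i j
  proof -
    have "cmod ((A ** B)$i$j) = cmod (\<Sum>k\<in>UNIV. A$i$k * B$k$j)" by (simp add: matrix_matrix_mult_def)
    also have "\<dots> \<le> (\<Sum>k\<in>UNIV. cmod (A$i$k * B$k$j))" by (rule norm_sum)
    also have "\<dots> \<le> (\<Sum>k\<in>(UNIV::'n set). norm A * norm B)"
      by (rule sum_mono) (simp add: norm_mult, intro mult_mono mnorm_entry, auto)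
    finally show ?thesis by simp
  qed
  then have "norm (A ** B) \<le> real CARD('n)^2 * (real CARD('n) * (norm A * norm B))"
    by (intro mnorm_bound) auto
  then show ?thesis by (simp add: power_def algebra_simps eval_nat_numeral)
qed

lemma mnorm_mv: "norm ((A::'n::finite cm) *v x) \<le> real CARD('n)^2 * norm A * norm x"
proof -
  have "cmod ((A *v x)$i) \<le> real CARD('n) * (norm A * norm x)" for i
  proof -
    have "cmod ((A *v x)$i) = cmod (\<Sum>k\<in>UNIV. A$i$k * x$k)" by (simp add: matrix_vector_mult_def)
    also have "\<dots> \<le> (\<Sum>k\<in>UNIV. cmod (A$i$k * x$k))" by (rule norm_sum)
    also have "\<dots> \<le> (\<Sum>k\<in>(UNIV::'n set). norm A * norm x)"
      by (rule sum_mono) (simp add: norm_mult, intro mult_mono mnorm_entry Finite_Cartesian_Product.norm_nth_le, auto)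
    finally show ?thesis by simp
  qed
  then have "norm (A *v x) \<le> real CARD('n) * (real CARD('n) * (norm A * norm x))"
    by (intro vnorm_bound) auto
  then show ?thesis by (simp add: power2_eq_square algebra_simps)
qed

lemma mnorm_mat: "norm (mat c :: 'n::finite cm) \<le> real CARD('n)^2 * cmod c"
  by (rule mnorm_bound) (simp add: mat_def)

definition msc :: "complex \<Rightarrow> 'n::finite cm \<Rightarrow> 'n cm" where
  "msc k X = (\<chi> i j. k * X$i$j)"

lemma msc_mult_l: "msc k X ** (Y::'n::finite cm) = msc k (X ** Y)"
  by (simp add: vec_eq_iff msc_def matrix_matrix_mult_def sum_distrib_left mult.assoc)
lemma msc_norm: "norm (msc k (X::'n::finite cm)) \<le> real CARD('n)^2 * (cmod k * norm X)"
  by (rule mnorm_bound) (auto simp: msc_def norm_mult intro!: mult_left_mono mnorm_entry)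

lemma inv_props: "invertible (A::'n::finite cm) \<Longrightarrow> A ** matrix_inv A = mat 1 \<and> matrix_inv A ** A = mat 1"
  unfolding invertible_def matrix_inv_def by (rule someI_ex)

definition R0m :: "complex \<Rightarrow> real^'n::finite \<Rightarrow> 'n cm" where
  "R0m z \<alpha> = (\<chi> i j. if i = j then 1 / (z - of_real (\<alpha>$i)) else 0)"

lemma diag_mult: "((\<chi> i j. if i = j then a i else 0) :: 'n::finite cm) ** (\<chi> i j. if i = j then b i else 0)
   = (\<chi> i j. if i = j then a i * b i else 0)"
proof -
  have "(\<Sum>k\<in>UNIV. (if i = k then a i else 0) * (if k = j then b k else 0)) = (if i = j then a i * b i else 0)" for i j :: 'n
  proof -
    have "(\<Sum>k\<in>UNIV. (if i = k then a i else 0) * (if k = j then b k else 0)) = (\<Sum>k\<in>UNIV. if k = i then a i * (if k = j then b k else 0) else 0)"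
      by (rule sum.cong) auto
    also have "\<dots> = a i * (if i = j then b i else 0)" by (subst sum.delta) auto
    finally show ?thesis by auto
  qed
  then show ?thesis by (simp add: matrix_matrix_mult_def vec_eq_iff)
qed

lemma A0_diag: "mat z - diag_mat \<alpha> = ((\<chi> i j. if i = j then z - of_real (\<alpha>$i) else 0) :: 'n::finite cm)"
  by (auto simp: vec_eq_iff mat_def diag_mat_def)

lemma mat1_diag: "(mat 1 :: 'n::finite cm) = (\<chi> i j. if i = j then 1 else 0)"
  by (auto simp: vec_eq_iff mat_def)

lemma R0_inv:
  assumes "\<forall>i. z \<noteq> of_real (\<alpha>$i)"
  shows "(mat z - diag_mat \<alpha>) ** R0m z \<alpha> = (mat 1 :: 'n::finite cm)"
    and "R0m z \<alpha> ** (mat z - diag_mat \<alpha>) = (mat 1 :: 'n::finite cm)"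
proof -
  have nz: "z - of_real (\<alpha>$i) \<noteq> 0" for i using assms by auto
  show "(mat z - diag_mat \<alpha>) ** R0m z \<alpha> = (mat 1 :: 'n::finite cm)"
    using nz by (simp add: A0_diag R0m_def diag_mult mat1_diag vec_eq_iff)
  show "R0m z \<alpha> ** (mat z - diag_mat \<alpha>) = (mat 1 :: 'n::finite cm)"
    using nz by (simp add: A0_diag R0m_def diag_mult mat1_diag vec_eq_iff)
qed

lemma resolvent:
  fixes \<alpha> :: "real^'n::finite" and E :: "'n cm"
  assumes dpos: "d > 0" and dz: "\<forall>i. d \<le> cmod (z - of_real (\<alpha>$i))"
   and E: "norm E \<le> b" and small: "real CARD('n)^6 * (real CARD('n)^2/d) * b \<le> 1/2"
  shows "invertible (mat z - (diag_mat \<alpha> + E))"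
   and "matrix_inv (mat z - (diag_mat \<alpha> + E)) = R0m z \<alpha> + R0m z \<alpha> ** E ** matrix_inv (mat z - (diag_mat \<alpha> + E))"
   and "norm (matrix_inv (mat z - (diag_mat \<alpha> + E))) \<le> 2 * (real CARD('n)^2/d)"
   and "norm (R0m z \<alpha>) \<le> real CARD('n)^2/d"
proof -
  define N where "N = real CARD('n)"
  define B where "B = N^2/d"
  define R0 where "R0 = R0m z \<alpha>"
  define A0 where "A0 = mat z - diag_mat \<alpha>"
  define X where "X = mat z - (diag_mat \<alpha> + E)"
  have N1: "N \<ge> 1" unfolding N_def by (simp add: Suc_le_eq)
  have N5: "N^5 \<le> N^6" using N1 by (simp add: power_increasing)
  have Bpos: "B \<ge> 0" unfolding B_def using dpos by simp
  have b0: "b \<ge> 0" using E norm_ge_zero order_trans by blast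
  have zne: "\<forall>i. z \<noteq> of_real (\<alpha>$i)" using dz dpos by (metis diff_self norm_zero not_le)
  have A0R: "A0 ** R0 = mat 1" and RA0: "R0 ** A0 = mat 1"
    using R0_inv[OF zne] unfolding A0_def R0_def by auto
  have "\<forall>i j. cmod (R0$i$j) \<le> 1/d"
  proof (intro allI)
    fix i j
    show "cmod (R0$i$j) \<le> 1/d"
    proof (cases "i = j")
      case True
      have "1 / cmod (z - of_real (\<alpha>$i)) \<le> 1/d"
        using dz dpos by (intro frac_le) auto
      then show ?thesis using True by (simp add: R0_def R0m_def norm_divide)
    next
      case False then show ?thesis using dpos by (simp add: R0_def R0m_def)
    qed
  qed
  then have nR0: "norm R0 \<le> B" unfolding B_def N_def using mnorm_bound[of R0 "1/d"] by simp
  have nRE: "norm (R0 ** E) \<le> N^3 * B * b"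
  proof -
    have "norm (R0 ** E) \<le> N^3 * norm R0 * norm E" unfolding N_def by (rule mnorm_mult)
    also have "\<dots> \<le> N^3 * B * b" using nR0 E Bpos N1 by (intro mult_mono) auto
    finally show ?thesis .
  qed
  have XA0: "X = A0 - E" unfolding X_def A0_def by simp
  have ker: "v = 0" if "X *v v = 0" for v
  proof -
    have "A0 *v v = E *v v" using that unfolding XA0 by (simp add: matrix_vector_mult_diff_rdistrib)
    then have "v = (R0 ** E) *v v"
      by (metis RA0 matrix_vector_mul_assoc matrix_vector_mul_lid)
    then have "norm v \<le> N^2 * norm (R0 ** E) * norm v" unfolding N_def by (metis mnorm_mv)
    also have "\<dots> \<le> N^2 * (N^3 * B * b) * norm v" using nRE N1 Bpos b0 by (intro mult_mono) auto
    also have "\<dots> = N^5 * B * b * norm v" by (simp add: eval_nat_numeral)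
    also have "\<dots> \<le> N^6 * B * b * norm v" using N5 Bpos b0 by (intro mult_mono) auto
    also have "\<dots> \<le> 1/2 * norm v" using small unfolding N_def[symmetric] B_def[symmetric]
      by (intro mult_right_mono) auto
    finally show ?thesis by simp
  qed
  have "inj ((*v) X)"
  proof (rule injI)
    fix u w assume "X *v u = X *v w"
    then have "X *v (u - w) = 0" by (simp add: matrix_vector_mult_diff_distrib)
    then show "u = w" using ker[of "u - w"] by simp
  qed
  then have invX: "invertible X" using invertible_left_inverse matrix_left_invertible_injective by blast
  then show "invertible (mat z - (diag_mat \<alpha> + E))" unfolding X_def .
  define R where "R = matrix_inv X"
  have XR: "X ** R = mat 1" using inv_props[OF invX] unfolding R_def by auto
  have Req: "R = R0 + R0 ** E ** R"
  proof -
    have "R = (R0 ** A0) ** R" by (simp add: RA0)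
    also have "\<dots> = R0 ** (A0 ** R)" by (simp add: matrix_mul_assoc)
    also have "A0 ** R = mat 1 + E ** R" using XR unfolding XA0 by (simp add: mm_diff_r algebra_simps)
    also have "R0 ** (mat 1 + E ** R) = R0 + R0 ** E ** R" by (simp add: mm_add_l matrix_mul_assoc)
    finally show ?thesis .
  qed
  then show "matrix_inv (mat z - (diag_mat \<alpha> + E)) = R0m z \<alpha> + R0m z \<alpha> ** E ** matrix_inv (mat z - (diag_mat \<alpha> + E))"
    unfolding R_def X_def R0_def .
  have "norm R \<le> norm R0 + norm (R0 ** E ** R)" by (subst Req) (rule norm_triangle_ineq)
  also have "norm (R0 ** E ** R) \<le> N^3 * norm (R0 ** E) * norm R" unfolding N_def by (rule mnorm_mult)
  also have "\<dots> \<le> N^3 * (N^3 * B * b) * norm R" using nRE N1 Bpos b0 by (intro mult_mono) auto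
  also have "\<dots> = N^6 * B * b * norm R" by (simp add: eval_nat_numeral)
  also have "\<dots> \<le> 1/2 * norm R" using small unfolding N_def[symmetric] B_def[symmetric]
      by (intro mult_right_mono) auto
  finally have "norm R \<le> norm R0 + 1/2 * norm R" by simp
  then have "norm R \<le> 2 * B" using nR0 by simp
  then show "norm (matrix_inv (mat z - (diag_mat \<alpha> + E))) \<le> 2 * (real CARD('n)^2/d)"
    unfolding R_def X_def B_def N_def .
  show "norm (R0m z \<alpha>) \<le> real CARD('n)^2/d" using nR0 unfolding R0_def B_def N_def .
qed

definition mcont :: "complex set \<Rightarrow> (complex \<Rightarrow> 'n::finite cm) \<Rightarrow> bool" where
  "mcont S F \<longleftrightarrow> (\<forall>j k. continuous_on S (\<lambda>z. F z $ j $ k))"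

definition CI :: "(real \<Rightarrow> complex) \<Rightarrow> (complex \<Rightarrow> 'n::finite cm) \<Rightarrow> 'n cm" where
  "CI \<gamma> F = (\<chi> j k. contour_integral \<gamma> (\<lambda>z. F z $ j $ k))"

lemma mcont_int: "r > 0 \<Longrightarrow> mcont (sphere c r) F \<Longrightarrow> (\<lambda>z. F z $ j $ k) contour_integrable_on circlepath c r"
  by (rule contour_integrable_continuous_circlepath) (simp add: mcont_def)

lemma mcont_right: "mcont S F \<Longrightarrow> mcont S (\<lambda>z. F z ** X)"
  unfolding mcont_def matrix_matrix_mult_def
  by (simp, intro allI continuous_on_sum continuous_on_mult continuous_on_const, auto)

lemma mcont_left: "mcont S F \<Longrightarrow> mcont S (\<lambda>z. X ** F z)"
  unfolding mcont_def matrix_matrix_mult_def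
  by (simp, intro allI continuous_on_sum continuous_on_mult continuous_on_const, auto)

lemma mcont_diff: "mcont S F \<Longrightarrow> mcont S G \<Longrightarrow> mcont S (\<lambda>z. F z - G z)"
  unfolding mcont_def by (simp, intro allI continuous_on_diff, auto)

lemma mcont_W: "0 \<notin> S \<Longrightarrow> mcont S (\<lambda>z. (\<chi> j k. Z$j$k / z) :: 'n::finite cm)"
  unfolding mcont_def by (auto intro!: continuous_intros)

lemma mcont_cong: "(\<And>z. z \<in> S \<Longrightarrow> F z = G z) \<Longrightarrow> mcont S F \<Longrightarrow> mcont S G"
  unfolding mcont_def by (metis (no_types, lifting) continuous_on_cong)

lemma CI_cong: "r > 0 \<Longrightarrow> (\<And>z. z \<in> sphere c r \<Longrightarrow> F z = G z) \<Longrightarrow> CI (circlepath c r) F = CI (circlepath c r) G"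
  unfolding CI_def by (auto simp: vec_eq_iff intro!: contour_integral_eq)

lemma CI_right:
  assumes "r > 0" "mcont (sphere c r) F"
  shows "CI (circlepath c r) (\<lambda>z. F z ** X) = CI (circlepath c r) F ** X"
proof -
  have "contour_integral (circlepath c r) (\<lambda>z. \<Sum>l\<in>UNIV. F z $ j $ l * X $ l $ k)
        = (\<Sum>l\<in>UNIV. contour_integral (circlepath c r) (\<lambda>z. F z $ j $ l) * X $ l $ k)" for j k
    using mcont_int[OF assms]
    by (simp add: contour_integral_sum contour_integrable_rmul contour_integral_rmul)
  then show ?thesis by (simp add: CI_def vec_eq_iff matrix_matrix_mult_def)
qed

lemma CI_left:
  assumes "r > 0" "mcont (sphere c r) F"
  shows "CI (circlepath c r) (\<lambda>z. X ** F z) = X ** CI (circlepath c r) F"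
proof -
  have "contour_integral (circlepath c r) (\<lambda>z. \<Sum>l\<in>UNIV. X $ j $ l * F z $ l $ k)
        = (\<Sum>l\<in>UNIV. X $ j $ l * contour_integral (circlepath c r) (\<lambda>z. F z $ l $ k))" for j k
    using mcont_int[OF assms]
    by (simp add: contour_integral_sum contour_integrable_lmul contour_integral_lmul)
  then show ?thesis by (simp add: CI_def vec_eq_iff matrix_matrix_mult_def)
qed

lemma CI_diff:
  assumes "r > 0" "mcont (sphere c r) F" "mcont (sphere c r) G"
  shows "CI (circlepath c r) (\<lambda>z. F z - G z) = CI (circlepath c r) F - CI (circlepath c r) G"
  using mcont_int[OF assms(1,2)] mcont_int[OF assms(1,3)]
  by (simp add: CI_def vec_eq_iff contour_integral_diff)

lemma CI_bound:
  fixes F :: "complex \<Rightarrow> 'n::finite cm"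
  assumes "r > 0" "mcont (sphere c r) F" "B \<ge> 0" "\<And>z. z \<in> sphere c r \<Longrightarrow> norm (F z) \<le> B"
  shows "norm (CI (circlepath c r) F) \<le> real CARD('n)^2 * (B * (2*pi*r))"
proof (rule mnorm_bound, intro allI)
  fix j k :: 'n
  have "((\<lambda>z. F z $ j $ k) has_contour_integral (CI (circlepath c r) F $ j $ k)) (circlepath c r)"
    using mcont_int[OF assms(1,2)] by (simp add: CI_def has_contour_integral_integral)
  then show "cmod (CI (circlepath c r) F $ j $ k) \<le> B * (2*pi*r)"
  proof (rule has_contour_integral_bound_circlepath)
    fix x assume "norm (x - c) = r"
    then have "x \<in> sphere c r" by (simp add: dist_norm norm_minus_commute)
    then show "norm (F x $ j $ k) \<le> B" using assms(4) mnorm_entry order_trans by blast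
  qed (use assms in auto)
qed

lemma CI_W_zero:
  assumes "r > 0" "cmod c > r"
  shows "CI (circlepath c r) (\<lambda>z. (\<chi> j k. Z$j$k / z) :: 'n::finite cm) = 0"
proof -
  have "((\<lambda>z. Z$j$k / z) has_contour_integral 0) (circlepath c r)" for j k
  proof (rule Cauchy_theorem_disc_simple[where a=c and e="cmod c"])
    show "(\<lambda>z. Z$j$k / z) holomorphic_on ball c (cmod c)"
      by (intro holomorphic_intros) (auto simp: dist_norm)
    show "path_image (circlepath c r) \<subseteq> ball c (cmod c)" using assms by auto
  qed auto
  then show ?thesis by (simp add: CI_def vec_eq_iff contour_integral_unique)
qed

lemma riesz_CI: "riesz_proj c r M = msc (1 / (2 * pi * \<i>)) (CI (circlepath c r) (\<lambda>z. matrix_inv (mat z - M)))"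
  by (simp add: riesz_proj_def msc_def CI_def)

lemma res_diff:
  assumes "invertible (mat z - M)" "invertible (mat w - (M :: 'n::finite cm))"
  shows "matrix_inv (mat z - M) - matrix_inv (mat w - M) = matrix_inv (mat z - M) ** mat (w - z) ** matrix_inv (mat w - M)"
proof -
  define Rz where "Rz = matrix_inv (mat z - M)"
  define Rw where "Rw = matrix_inv (mat w - M)"
  have 1: "Rz ** (mat z - M) = mat 1" using inv_props[OF assms(1)] Rz_def by auto
  have 2: "(mat w - M) ** Rw = mat 1" using inv_props[OF assms(2)] Rw_def by auto
  have "mat (w - z) = (mat w - M) - (mat z - M)" by (simp add: mat_diff')
  then have "Rz ** mat (w - z) ** Rw = Rz ** ((mat w - M) ** Rw) - (Rz ** (mat z - M)) ** Rw"
    by (simp add: mm_diff_l mm_diff_r matrix_mul_assoc)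
  also have "\<dots> = Rz - Rw" using 1 2 by simp
  finally show ?thesis unfolding Rz_def Rw_def by simp
qed

lemma res_cont:
  assumes "\<And>z. z \<in> S \<Longrightarrow> invertible (mat z - (M :: 'n::finite cm)) \<and> norm (matrix_inv (mat z - M)) \<le> Bd"
  shows "mcont S (\<lambda>z. matrix_inv (mat z - M))"
  unfolding mcont_def
proof (intro allI)
  fix j k :: 'n
  define N where "N = real CARD('n)"
  define L where "L = N^3 * (N^3 * Bd * N^2) * Bd"
  have N1: "N \<ge> 1" unfolding N_def by (simp add: Suc_le_eq)
  show "continuous_on S (\<lambda>z. matrix_inv (mat z - M) $ j $ k)"
  proof (cases "S = {}")
    case True then show ?thesis by simp
  next
    case False
    then obtain z0 where "z0 \<in> S" by auto
    then have Bd0: "Bd \<ge> 0" using assms norm_ge_zero order_trans by blast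
    show ?thesis
    proof (rule lipschitz_on_continuous_on[where L = L], rule lipschitz_onI)
      show "0 \<le> L" unfolding L_def using Bd0 N1 by simp
      fix z w assume z: "z \<in> S" and w: "w \<in> S"
      define Rz where "Rz = matrix_inv (mat z - M)"
      define Rw where "Rw = matrix_inv (mat w - M)"
      have nz: "norm Rz \<le> Bd" and nw: "norm Rw \<le> Bd" using assms z w Rz_def Rw_def by auto
      have "dist (Rz $ j $ k) (Rw $ j $ k) = cmod ((Rz - Rw) $ j $ k)" by (simp add: dist_norm)
      also have "\<dots> \<le> norm (Rz - Rw)" by (rule mnorm_entry)
      also have "Rz - Rw = Rz ** mat (w - z) ** Rw" unfolding Rz_def Rw_def using assms z w by (intro res_diff) auto
      also have "norm \<dots> \<le> N^3 * norm (Rz ** mat (w - z)) * norm Rw" unfolding N_def by (rule mnorm_mult)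
      also have "\<dots> \<le> N^3 * (N^3 * Bd * (N^2 * cmod (w - z))) * Bd"
      proof -
        have "norm (Rz ** mat (w - z)) \<le> N^3 * norm Rz * norm (mat (w - z) :: 'n cm)" unfolding N_def by (rule mnorm_mult)
        also have "\<dots> \<le> N^3 * Bd * (N^2 * cmod (w - z))"
          using nz mnorm_mat[of "w - z", where 'n='n] N1 Bd0 unfolding N_def by (intro mult_mono) auto
        finally show ?thesis using nw N1 Bd0 by (intro mult_mono) auto
      qed
      also have "\<dots> = L * dist z w" by (simp add: L_def dist_norm norm_minus_commute)
      finally show "dist (Rz $ j $ k) (Rw $ j $ k) \<le> L * dist z w" .
    qed
  qed
qed

lemma msc_mult_r: "(X::'n::finite cm) ** msc k Y = msc k (X ** Y)"
  by (simp add: vec_eq_iff msc_def matrix_matrix_mult_def sum_distrib_left mult.left_commute)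

lemma R0W:
  fixes Z :: "'n::finite cm"
  assumes zc: "\<forall>i k. \<alpha>$i \<noteq> 0 \<longrightarrow> Z$i$k = 0 \<and> Z$k$i = 0"
  shows "R0m z \<alpha> ** Z = (\<chi> j k. Z$j$k / z)" and "Z ** R0m z \<alpha> = (\<chi> j k. Z$j$k / z)"
proof -
  have "(R0m z \<alpha> ** Z)$j$k = Z$j$k / z" for j k
  proof -
    have "(R0m z \<alpha> ** Z)$j$k = (\<Sum>l\<in>UNIV. if l = j then 1 / (z - of_real (\<alpha>$j)) * Z$l$k else 0)"
      unfolding matrix_matrix_mult_def R0m_def vec_lambda_beta by (rule sum.cong) auto
    also have "\<dots> = Z$j$k / (z - of_real (\<alpha>$j))" by (subst sum.delta) auto
    also have "\<dots> = Z$j$k / z" using zc by (cases "\<alpha>$j = 0") auto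
    finally show ?thesis .
  qed
  then show "R0m z \<alpha> ** Z = (\<chi> j k. Z$j$k / z)" by (simp add: vec_eq_iff)
  have "(Z ** R0m z \<alpha>)$j$k = Z$j$k / z" for j k
  proof -
    have "(Z ** R0m z \<alpha>)$j$k = (\<Sum>l\<in>UNIV. if l = k then Z$j$l * (1 / (z - of_real (\<alpha>$k))) else 0)"
      unfolding matrix_matrix_mult_def R0m_def vec_lambda_beta by (rule sum.cong) auto
    also have "\<dots> = Z$j$k / (z - of_real (\<alpha>$k))" by (subst sum.delta) auto
    also have "\<dots> = Z$j$k / z" using zc by (cases "\<alpha>$k = 0") auto
    finally show ?thesis .
  qed
  then show "Z ** R0m z \<alpha> = (\<chi> j k. Z$j$k / z)" by (simp add: vec_eq_iff)
qed

lemma circle_facts: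
  fixes \<alpha> :: "real^'n::finite" and E :: "'n cm"
  assumes dpos: "d > 0" and dz: "\<And>z i. z \<in> sphere c r \<Longrightarrow> d \<le> cmod (z - of_real (\<alpha>$i))"
   and E: "norm E \<le> b" and small: "real CARD('n)^6 * (real CARD('n)^2/d) * b \<le> 1/2"
  shows "mcont (sphere c r) (\<lambda>z. matrix_inv (mat z - (diag_mat \<alpha> + E)))"
   and "\<And>z. z \<in> sphere c r \<Longrightarrow> matrix_inv (mat z - (diag_mat \<alpha> + E)) = R0m z \<alpha> + R0m z \<alpha> ** E ** matrix_inv (mat z - (diag_mat \<alpha> + E))"
   and "\<And>z. z \<in> sphere c r \<Longrightarrow> norm (matrix_inv (mat z - (diag_mat \<alpha> + E))) \<le> 2 * (real CARD('n)^2/d)"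
   and "\<And>z. z \<in> sphere c r \<Longrightarrow> norm (R0m z \<alpha>) \<le> real CARD('n)^2/d"
proof -
  show "mcont (sphere c r) (\<lambda>z. matrix_inv (mat z - (diag_mat \<alpha> + E)))"
    by (rule res_cont[where Bd = "2 * (real CARD('n)^2/d)"]) (use resolvent[OF dpos _ E small] dz in auto)
  show "\<And>z. z \<in> sphere c r \<Longrightarrow> matrix_inv (mat z - (diag_mat \<alpha> + E)) = R0m z \<alpha> + R0m z \<alpha> ** E ** matrix_inv (mat z - (diag_mat \<alpha> + E))"
   and "\<And>z. z \<in> sphere c r \<Longrightarrow> norm (matrix_inv (mat z - (diag_mat \<alpha> + E))) \<le> 2 * (real CARD('n)^2/d)"
   and "\<And>z. z \<in> sphere c r \<Longrightarrow> norm (R0m z \<alpha>) \<le> real CARD('n)^2/d"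
    using resolvent[OF dpos _ E small] dz by auto
qed

lemma P_bound:
  fixes \<alpha> :: "real^'n::finite" and E :: "'n cm"
  assumes rpos: "r > 0" and dpos: "d > 0" and dz: "\<And>z i. z \<in> sphere c r \<Longrightarrow> d \<le> cmod (z - of_real (\<alpha>$i))"
   and E: "norm E \<le> b" and small: "real CARD('n)^6 * (real CARD('n)^2/d) * b \<le> 1/2"
  shows "norm (riesz_proj c r (diag_mat \<alpha> + E)) \<le> real CARD('n)^2 * (1/(2*pi) * (real CARD('n)^2 * (2 * (real CARD('n)^2/d) * (2*pi*r))))"
proof -
  note cf = circle_facts[OF dpos dz E small]
  have "norm (CI (circlepath c r) (\<lambda>z. matrix_inv (mat z - (diag_mat \<alpha> + E)))) \<le> real CARD('n)^2 * (2 * (real CARD('n)^2/d) * (2*pi*r))"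
    by (rule CI_bound[OF rpos cf(1)]) (use dpos cf(3) in auto)
  then have "cmod (1 / (2 * pi * \<i>)) * norm (CI (circlepath c r) (\<lambda>z. matrix_inv (mat z - (diag_mat \<alpha> + E))))
    \<le> 1/(2*pi) * (real CARD('n)^2 * (2 * (real CARD('n)^2/d) * (2*pi*r)))"
  proof -
    have cm: "cmod (1 / (2 * pi * \<i>)) = 1/(2*pi)" by (simp add: norm_divide norm_mult)
    show ?thesis unfolding cm by (rule mult_left_mono) (use \<open>norm (CI _ _) \<le> _\<close> in auto)
  qed
  then show ?thesis unfolding riesz_CI
    by (intro order_trans[OF msc_norm]) (intro mult_left_mono, auto)
qed

definition Kconst :: "real \<Rightarrow> real \<Rightarrow> real \<Rightarrow> real" where
  "Kconst N B0 r = N^2 * (1/(2*pi) * (N^2 * ((N^3 * (N^3 * (N^3 * B0) * (2*B0))) * (2*pi*r))))"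

lemma msc_k0_norm:
  assumes "norm (M::'n::finite cm) \<le> T"
  shows "norm (msc (1 / (2 * pi * \<i>)) M) \<le> real CARD('n)^2 * (1/(2*pi) * T)"
proof -
  have cm: "cmod (1 / (2 * pi * \<i>)) = 1/(2*pi)" by (simp add: norm_divide norm_mult)
  have "cmod (1 / (2 * pi * \<i>)) * norm M \<le> 1/(2*pi) * T" unfolding cm by (rule mult_left_mono) (use assms in auto)
  then show ?thesis by (intro order_trans[OF msc_norm]) (intro mult_left_mono, auto)
qed

lemma key:
  fixes \<alpha> :: "real^'n::finite" and E Z X :: "'n cm"
  assumes rpos: "r > 0" and dpos: "d > 0"
   and dz: "\<And>z i. z \<in> sphere c r \<Longrightarrow> d \<le> cmod (z - of_real (\<alpha>$i))"
   and dz0: "\<And>z. z \<in> sphere c r \<Longrightarrow> d \<le> cmod z"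
   and cout: "cmod c > r"
   and E: "norm E \<le> b" and Zb: "norm Z \<le> b"
   and small: "real CARD('n)^6 * (real CARD('n)^2/d) * b \<le> 1/2"
   and zc: "\<forall>i k. \<alpha>$i \<noteq> 0 \<longrightarrow> Z$i$k = 0 \<and> Z$k$i = 0"
  shows "norm (riesz_proj c r (diag_mat \<alpha> + E) ** Z ** X) \<le> Kconst (real CARD('n)) (real CARD('n)^2/d) r * b * norm (Z ** X)"
    and "norm (Z ** riesz_proj c r (diag_mat \<alpha> + E)) \<le> Kconst (real CARD('n)) (real CARD('n)^2/d) r * b * b"
proof -
  define N where "N = real CARD('n)"
  define B0 where "B0 = N^2/d"
  define k0 where "k0 = 1 / (2 * pi * \<i>)"
  define R where "R = (\<lambda>z. matrix_inv (mat z - (diag_mat \<alpha> + E)))"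
  define W where "W = (\<lambda>z. (\<chi> j k. Z$j$k / z) :: 'n cm)"
  define S where "S = sphere c r"
  define \<gamma> where "\<gamma> = circlepath c r"
  define Q where "Q = N^3 * (N^3 * (N^3 * B0 * b) * (2*B0))"
  note cf0 = circle_facts[of d c r \<alpha> E b, OF dpos dz E small]
  have cf1: "mcont S R" using cf0(1) unfolding R_def S_def .
  have cf2: "R z = R0m z \<alpha> + R0m z \<alpha> ** E ** R z" if "z \<in> S" for z
    using cf0(2) that unfolding R_def S_def by blast
  have cf3: "norm (R z) \<le> 2 * B0" if "z \<in> S" for z
    using cf0(3) that unfolding R_def S_def B0_def N_def by blast
  have cf4: "norm (R0m z \<alpha>) \<le> B0" if "z \<in> S" for z
    using cf0(4) that unfolding S_def B0_def N_def by blast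
  have N1: "N \<ge> 1" unfolding N_def by (simp add: Suc_le_eq)
  have B0pos: "B0 \<ge> 0" unfolding B0_def using dpos by simp
  have b0: "b \<ge> 0" using E norm_ge_zero order_trans by blast
  have Q0: "Q \<ge> 0" unfolding Q_def using N1 B0pos b0 by simp
  have P: "riesz_proj c r (diag_mat \<alpha> + E) = msc k0 (CI \<gamma> R)" unfolding riesz_CI k0_def \<gamma>_def R_def ..
  have mR: "mcont S R" using cf1 .
  have nS: "0 \<notin> S" using dz0 dpos unfolding S_def by (metis norm_zero not_le)
  have mW: "mcont S W" unfolding W_def by (rule mcont_W[OF nS])
  have CIW: "CI \<gamma> W = 0" unfolding \<gamma>_def W_def by (rule CI_W_zero[OF rpos cout])
  have R0Z: "R0m z \<alpha> ** Z = W z" and ZR0: "Z ** R0m z \<alpha> = W z" for z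
    using R0W[OF zc] unfolding W_def by auto
  have nRE: "norm (R0m z \<alpha> ** E ** R z) \<le> N^3 * (N^3 * B0 * b) * (2*B0)" if "z \<in> S" for z
  proof -
    have "norm (R0m z \<alpha> ** E) \<le> N^3 * norm (R0m z \<alpha>) * norm E" unfolding N_def by (rule mnorm_mult)
    also have "\<dots> \<le> N^3 * B0 * b" using cf4[OF that] E N1 B0pos by (intro mult_mono mult_left_mono) auto
    finally have a: "norm (R0m z \<alpha> ** E) \<le> N^3 * B0 * b" .
    have "norm (R0m z \<alpha> ** E ** R z) \<le> N^3 * norm (R0m z \<alpha> ** E) * norm (R z)" unfolding N_def by (rule mnorm_mult)
    also have "\<dots> \<le> N^3 * (N^3 * B0 * b) * (2*B0)" using a cf3[OF that] N1 B0pos b0 by (intro mult_mono mult_left_mono) auto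
    finally show ?thesis .
  qed
  define G where "G = (\<lambda>z. R z ** Z - W z)"
  have mG: "mcont S G" unfolding G_def by (intro mcont_diff mcont_right mR mW)
  have CIG: "CI \<gamma> G = CI \<gamma> R ** Z"
    unfolding G_def \<gamma>_def using CI_diff[OF rpos mcont_right[OF mR[unfolded S_def]] mW[unfolded S_def]]
      CIW CI_right[OF rpos mR[unfolded S_def]] unfolding \<gamma>_def by simp
  have Geq: "G z = R0m z \<alpha> ** E ** R z ** Z" if "z \<in> S" for z
  proof -
    have "R z ** Z = (R0m z \<alpha> + R0m z \<alpha> ** E ** R z) ** Z" using cf2[OF that] by simp
    also have "\<dots> = W z + R0m z \<alpha> ** E ** R z ** Z" by (simp add: mm_add_r R0Z)
    finally show ?thesis unfolding G_def by simp
  qed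
  show "norm (riesz_proj c r (diag_mat \<alpha> + E) ** Z ** X) \<le> Kconst (real CARD('n)) (real CARD('n)^2/d) r * b * norm (Z ** X)"
  proof -
    have bnd: "norm (G z ** X) \<le> Q * norm (Z ** X)" if "z \<in> S" for z
    proof -
      have "G z ** X = (R0m z \<alpha> ** E ** R z) ** (Z ** X)" using Geq[OF that] by (simp add: matrix_mul_assoc)
      then have "norm (G z ** X) \<le> N^3 * norm (R0m z \<alpha> ** E ** R z) * norm (Z ** X)"
        unfolding N_def by (simp only: mnorm_mult)
      also have "\<dots> \<le> Q * norm (Z ** X)" unfolding Q_def
        using nRE[OF that] N1 by (intro mult_right_mono mult_left_mono) auto
      finally show ?thesis .
    qed
    have c1: "norm (CI \<gamma> (\<lambda>z. G z ** X)) \<le> N^2 * (Q * norm (Z ** X) * (2*pi*r))"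
      unfolding \<gamma>_def N_def by (rule CI_bound[OF rpos mcont_right[OF mG[unfolded S_def]]]) (use Q0 bnd S_def in auto)
    have c2: "CI \<gamma> (\<lambda>z. G z ** X) = CI \<gamma> G ** X" unfolding \<gamma>_def by (rule CI_right[OF rpos mG[unfolded S_def]])
    have c3: "riesz_proj c r (diag_mat \<alpha> + E) ** Z ** X = msc k0 (CI \<gamma> G ** X)"
      unfolding P CIG by (simp add: msc_mult_l)
    have "norm (riesz_proj c r (diag_mat \<alpha> + E) ** Z ** X) \<le> N^2 * (1/(2*pi) * (N^2 * (Q * norm (Z ** X) * (2*pi*r))))"
      unfolding c3 k0_def N_def by (rule msc_k0_norm) (use c1 c2 N_def in simp)
    also have "\<dots> = Kconst N B0 r * b * norm (Z ** X)" unfolding Kconst_def Q_def by (simp add: mult_ac)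
    finally show ?thesis unfolding N_def B0_def .
  qed
  define H where "H = (\<lambda>z. Z ** R z - W z)"
  have mH: "mcont S H" unfolding H_def by (intro mcont_diff mcont_left mR mW)
  have CIH: "CI \<gamma> H = Z ** CI \<gamma> R"
    unfolding H_def \<gamma>_def using CI_diff[OF rpos mcont_left[OF mR[unfolded S_def]] mW[unfolded S_def]]
      CIW CI_left[OF rpos mR[unfolded S_def]] unfolding \<gamma>_def by simp
  have Heq: "H z = W z ** E ** R z" if "z \<in> S" for z
  proof -
    have "Z ** R z = Z ** (R0m z \<alpha> + R0m z \<alpha> ** E ** R z)" using cf2[OF that] by simp
    also have "\<dots> = W z + W z ** E ** R z" by (simp add: mm_add_l ZR0 matrix_mul_assoc)
    finally show ?thesis unfolding H_def by simp
  qed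
  show "norm (Z ** riesz_proj c r (diag_mat \<alpha> + E)) \<le> Kconst (real CARD('n)) (real CARD('n)^2/d) r * b * b"
  proof -
    have bnd: "norm (H z) \<le> Q * b" if "z \<in> S" for z
    proof -
      have "\<forall>j k. cmod (W z $ j $ k) \<le> b / d"
      proof (intro allI)
        fix j k
        have "cmod (Z$j$k) \<le> b" using Zb mnorm_entry order_trans by blast
        moreover have "d \<le> cmod z" using dz0 that S_def by auto
        ultimately show "cmod (W z $ j $ k) \<le> b / d" unfolding W_def using dpos b0
          by (simp add: norm_divide frac_le)
      qed
      then have nW: "norm (W z) \<le> B0 * b" using mnorm_bound[of "W z" "b/d"] unfolding B0_def N_def by simp
      have "norm (W z ** E) \<le> N^3 * norm (W z) * norm E" unfolding N_def by (rule mnorm_mult)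
      also have "\<dots> \<le> N^3 * (B0 * b) * b" using nW E N1 B0pos b0 by (intro mult_mono mult_left_mono) auto
      finally have a: "norm (W z ** E) \<le> N^3 * (B0 * b) * b" .
      have "norm (H z) \<le> N^3 * norm (W z ** E) * norm (R z)" unfolding Heq[OF that] N_def by (rule mnorm_mult)
      also have "\<dots> \<le> N^3 * (N^3 * (B0 * b) * b) * (2*B0)"
        using a cf3[OF that] N1 B0pos b0 by (intro mult_mono mult_left_mono) auto
      also have "\<dots> \<le> Q * b" unfolding Q_def
      proof -
        have "N^3 * (N^3 * (B0 * b) * b) * (2*B0) = (N^3 * N^3 * B0 * b * 2 * B0) * b * 1" by (simp add: mult_ac)
        also have "\<dots> \<le> (N^3 * N^3 * B0 * b * 2 * B0) * b * N^3"
          using N1 B0pos b0 by (intro mult_left_mono) (auto simp: one_le_power)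
        also have "\<dots> = N^3 * (N^3 * (N^3 * B0 * b) * (2*B0)) * b" by (simp add: mult_ac)
        finally show "N^3 * (N^3 * (B0 * b) * b) * (2*B0) \<le> N^3 * (N^3 * (N^3 * B0 * b) * (2*B0)) * b" .
      qed
      finally show ?thesis .
    qed
    have c1: "norm (CI \<gamma> H) \<le> N^2 * (Q * b * (2*pi*r))"
      unfolding \<gamma>_def N_def by (rule CI_bound[OF rpos mH[unfolded S_def]]) (use Q0 b0 bnd S_def in auto)
    have c3: "Z ** riesz_proj c r (diag_mat \<alpha> + E) = msc k0 (CI \<gamma> H)"
      unfolding P CIH by (simp add: msc_mult_r)
    have "norm (Z ** riesz_proj c r (diag_mat \<alpha> + E)) \<le> N^2 * (1/(2*pi) * (N^2 * (Q * b * (2*pi*r))))"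
      unfolding c3 k0_def N_def by (rule msc_k0_norm) (use c1 N_def in simp)
    also have "\<dots> = Kconst N B0 r * b * b" unfolding Kconst_def Q_def by (simp add: mult_ac)
    finally show ?thesis unfolding N_def B0_def .
  qed
qed

lemma ctri: "cmod (a - c) \<le> cmod (a - b) + cmod (b - (c::complex))"
  using norm_triangle_ineq[of "a - b" "b - c"] by simp

lemma diag_mult_entry: "(diag_mat \<alpha> ** (Z::'n::finite cm))$i$k = of_real (\<alpha>$i) * Z$i$k"
proof -
  have "(diag_mat \<alpha> ** Z)$i$k = (\<Sum>l\<in>UNIV. if l = i then of_real (\<alpha>$i) * Z$l$k else 0)"
    unfolding matrix_matrix_mult_def diag_mat_def vec_lambda_beta by (rule sum.cong) auto
  also have "\<dots> = of_real (\<alpha>$i) * Z$i$k" by (subst sum.delta) auto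
  finally show ?thesis .
qed

lemma zc_lemma:
  assumes "hermitian (Z::'n::finite cm)" "\<forall>x. diag_mat \<alpha> *v (Z *v x) = 0"
  shows "\<forall>i k. \<alpha>$i \<noteq> 0 \<longrightarrow> Z$i$k = 0 \<and> Z$k$i = 0"
proof (intro allI impI)
  fix i k assume a: "\<alpha>$i \<noteq> 0"
  have "diag_mat \<alpha> ** Z = 0" unfolding matrix_eq using assms(2) by (simp add: matrix_vector_mul_assoc)
  then have "of_real (\<alpha>$i) * Z$i$k = 0" using diag_mult_entry[of \<alpha> Z i k] by simp
  then have 1: "Z$i$k = 0" using a by simp
  have "Z$k$i = conj_transpose Z $ k $ i" using assms(1) unfolding hermitian_def by simp
  also have "\<dots> = cnj (Z$i$k)" by (simp add: conj_transpose_def)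
  finally show "Z$i$k = 0 \<and> Z$k$i = 0" using 1 by simp
qed

theorem lemma3p4:
  fixes L :: "'n::finite set"
    and c0 c1 :: complex and r0 r1 :: real
    and \<alpha>0 :: "real^'n"
  assumes r0: "r0 > 0" and r1: "r1 > 0"
    and \<alpha>0_pos: "\<forall>i\<in>L. \<alpha>0 $ i > 0"
    and \<alpha>0_zero: "\<forall>i. i \<notin> L \<longrightarrow> \<alpha>0 $ i = 0"
    and \<Gamma>1_in: "\<forall>i\<in>L. cmod (complex_of_real (\<alpha>0 $ i) - c1) < r1"
    and \<Gamma>1_out: "cmod c1 > r1"
    and \<Gamma>0_in: "cmod c0 < r0"
    and \<Gamma>0_out: "\<forall>i\<in>L. cmod (complex_of_real (\<alpha>0 $ i) - c0) > r0"
  shows "\<exists>e>0. \<exists>C \<delta>. \<delta> > 0 \<and>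
    (\<forall>\<alpha> :: real^'n. \<forall>E Z :: complex^'n^'n. \<forall>b :: real.
       (\<forall>i\<in>L. \<alpha> $ i > 0) \<longrightarrow> (\<forall>i. i \<notin> L \<longrightarrow> \<alpha> $ i = 0) \<longrightarrow>
       dist \<alpha> \<alpha>0 < e \<longrightarrow>
       hermitian E \<longrightarrow> psd Z \<longrightarrow>
       (\<forall>x. diag_mat \<alpha> *v (Z *v x) = 0) \<longrightarrow>
       0 < b \<longrightarrow> b < \<delta> \<longrightarrow> norm E \<le> b \<longrightarrow> norm Z \<le> b \<longrightarrow>
       norm (riesz_proj c1 r1 (diag_mat \<alpha> + E) ** Z ** riesz_proj c0 r0 (diag_mat \<alpha> + E))
         \<le> C * b ^ 2 \<and>
       norm (riesz_proj c1 r1 (diag_mat \<alpha> + E) ** Z ** riesz_proj c1 r1 (diag_mat \<alpha> + E))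
         \<le> C * b ^ 3)"
proof -
  define gap where "gap i = min (r1 - cmod (complex_of_real (\<alpha>0 $ i) - c1)) (cmod (complex_of_real (\<alpha>0 $ i) - c0) - r0)" for i
  define GS where "GS = insert (cmod c1 - r1) (insert (r0 - cmod c0) (gap ` L))"
  have fin: "finite GS" unfolding GS_def by simp
  have pos: "\<forall>x\<in>GS. 0 < x" unfolding GS_def gap_def using \<Gamma>1_in \<Gamma>1_out \<Gamma>0_in \<Gamma>0_out by auto
  define d where "d = Min GS / 2"
  have dpos: "d > 0" unfolding d_def using fin pos Min_gr_iff[of GS 0] GS_def by auto
  have dle: "2 * d \<le> x" if "x \<in> GS" for x unfolding d_def using Min_le[OF fin that] by simp
  have h1: "cmod (complex_of_real (\<alpha>0 $ i) - c1) + 2 * d \<le> r1" if "i \<in> L" for i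
    using dle[of "gap i"] that unfolding GS_def gap_def by auto
  have h2: "r0 + 2 * d \<le> cmod (complex_of_real (\<alpha>0 $ i) - c0)" if "i \<in> L" for i
    using dle[of "gap i"] that unfolding GS_def gap_def by auto
  have h3: "r1 + 2 * d \<le> cmod c1" using dle[of "cmod c1 - r1"] unfolding GS_def by auto
  have h4: "cmod c0 + 2 * d \<le> r0" using dle[of "r0 - cmod c0"] unfolding GS_def by auto
  define N where "N = real CARD('n)"
  have N1: "N \<ge> 1" unfolding N_def by (simp add: Suc_le_eq)
  define B0 where "B0 = N^2 / d"
  have B0pos: "B0 > 0" unfolding B0_def using dpos N1 by simp
  define \<delta> where "\<delta> = 1 / (2 * N^6 * B0)"
  have \<delta>pos: "\<delta> > 0" unfolding \<delta>_def using B0pos N1 by simp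
  define K1 where "K1 = Kconst N B0 r1"
  define CP0 where "CP0 = N^2 * (1/(2*pi) * (N^2 * (2 * B0 * (2*pi*r0))))"
  have K1pos: "K1 \<ge> 0" unfolding K1_def Kconst_def using N1 B0pos r1 by simp
  have CP0pos: "CP0 \<ge> 0" unfolding CP0_def using N1 B0pos r0 by simp
  define C where "C = K1 * N^3 * CP0 + K1 * K1"
  show ?thesis
  proof (rule exI[of _ d], rule conjI[OF dpos], rule exI[of _ C], rule exI[of _ \<delta>], rule conjI[OF \<delta>pos], intro allI impI conjI)
    fix \<alpha> :: "real^'n" and E Z :: "complex^'n^'n" and b :: real
    assume \<alpha>pos: "\<forall>i\<in>L. \<alpha> $ i > 0" and \<alpha>zero: "\<forall>i. i \<notin> L \<longrightarrow> \<alpha> $ i = 0"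
      and dist: "dist \<alpha> \<alpha>0 < d" and herm: "hermitian E" and psdZ: "psd Z"
      and ker: "\<forall>x. diag_mat \<alpha> *v (Z *v x) = 0"
      and bpos: "0 < b" and b\<delta>: "b < \<delta>" and Eb: "norm E \<le> b" and Zb: "norm Z \<le> b"
    have small: "real CARD('n)^6 * (real CARD('n)^2/d) * b \<le> 1/2"
    proof -
      have "N^6 * B0 * b \<le> N^6 * B0 * \<delta>" using b\<delta> N1 B0pos by (intro mult_left_mono) auto
      also have "\<dots> = 1/2" unfolding \<delta>_def using B0pos N1 by simp
      finally show ?thesis unfolding N_def B0_def .
    qed
    have cl: "cmod (complex_of_real (\<alpha>$i) - complex_of_real (\<alpha>0$i)) < d" for i
    proof -
      have "\<bar>(\<alpha> - \<alpha>0)$i\<bar> \<le> norm (\<alpha> - \<alpha>0)" by (rule component_le_norm_cart)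
      then have "\<bar>\<alpha>$i - \<alpha>0$i\<bar> < d" using dist by (simp add: dist_norm)
      then show ?thesis by (metis norm_of_real of_real_diff real_norm_def)
    qed
    have dz1: "d \<le> cmod (z - of_real (\<alpha>$i))" and dz1': "d \<le> cmod z" if z: "z \<in> sphere c1 r1" for z i
    proof -
      have zc: "cmod (z - c1) = r1" using z by (simp add: dist_norm norm_minus_commute)
      have "cmod c1 \<le> cmod (c1 - z) + cmod (z - 0)" using ctri[where a=c1 and b=z and c=0] by (simp only: diff_zero)
      then show z0: "d \<le> cmod z" using zc h3 dpos by (simp add: norm_minus_commute)
      show "d \<le> cmod (z - of_real (\<alpha>$i))"
      proof (cases "i \<in> L")
        case True
        have "cmod (of_real (\<alpha>$i) - c1) \<le> cmod (of_real (\<alpha>$i) - of_real (\<alpha>0$i)) + cmod (of_real (\<alpha>0$i) - c1)" by (rule ctri)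
        moreover have "cmod (z - c1) \<le> cmod (z - of_real (\<alpha>$i)) + cmod (of_real (\<alpha>$i) - c1)" by (rule ctri)
        ultimately show ?thesis using cl[of i] h1[OF True] zc by linarith
      next
        case False then show ?thesis using \<alpha>zero z0 by simp
      qed
    qed
    have dz0: "d \<le> cmod (z - of_real (\<alpha>$i))" if z: "z \<in> sphere c0 r0" for z i
    proof -
      have zc: "cmod (z - c0) = r0" using z by (simp add: dist_norm norm_minus_commute)
      show "d \<le> cmod (z - of_real (\<alpha>$i))"
      proof (cases "i \<in> L")
        case True
        have "cmod (of_real (\<alpha>0$i) - c0) \<le> cmod (of_real (\<alpha>0$i) - of_real (\<alpha>$i)) + cmod (of_real (\<alpha>$i) - c0)" by (rule ctri)
        moreover have "cmod (of_real (\<alpha>$i) - c0) \<le> cmod (of_real (\<alpha>$i) - z) + cmod (z - c0)" by (rule ctri)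
        moreover have "cmod (of_real (\<alpha>0$i) - of_real (\<alpha>$i)) = cmod (of_real (\<alpha>$i) - of_real (\<alpha>0$i) :: complex)"
          by (rule norm_minus_commute)
        moreover have "cmod (of_real (\<alpha>$i) - z) = cmod (z - of_real (\<alpha>$i))" by (rule norm_minus_commute)
        ultimately show ?thesis using cl[of i] h2[OF True] zc by linarith
      next
        case False
        have "cmod (z - c0) \<le> cmod (z - 0) + cmod (0 - c0)" by (rule ctri)
        then show ?thesis using False \<alpha>zero zc h4 dpos by simp
      qed
    qed
    have zc: "\<forall>i k. \<alpha>$i \<noteq> 0 \<longrightarrow> Z$i$k = 0 \<and> Z$k$i = 0"
      using zc_lemma psdZ ker unfolding psd_def by blast
    have cout: "cmod c1 > r1" using \<Gamma>1_out .
    note ka = key(1)[OF r1 dpos dz1 dz1' cout Eb Zb small zc, folded N_def, folded B0_def, folded K1_def]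
    note kb = key(2)[OF r1 dpos dz1 dz1' cout Eb Zb small zc, folded N_def, folded B0_def, folded K1_def]
    have nP0: "norm (riesz_proj c0 r0 (diag_mat \<alpha> + E)) \<le> CP0"
      using P_bound[OF r0 dpos dz0 Eb small] unfolding CP0_def B0_def N_def by simp
    have b0: "b \<ge> 0" using bpos by simp
    show "norm (riesz_proj c1 r1 (diag_mat \<alpha> + E) ** Z ** riesz_proj c0 r0 (diag_mat \<alpha> + E)) \<le> C * b ^ 2"
    proof -
      have "norm (Z ** riesz_proj c0 r0 (diag_mat \<alpha> + E)) \<le> N^3 * norm Z * norm (riesz_proj c0 r0 (diag_mat \<alpha> + E))"
        unfolding N_def by (rule mnorm_mult)
      also have "\<dots> \<le> N^3 * b * CP0" using Zb nP0 N1 b0 by (intro mult_mono mult_left_mono) auto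
      finally have z: "norm (Z ** riesz_proj c0 r0 (diag_mat \<alpha> + E)) \<le> N^3 * b * CP0" .
      have "norm (riesz_proj c1 r1 (diag_mat \<alpha> + E) ** Z ** riesz_proj c0 r0 (diag_mat \<alpha> + E))
          \<le> K1 * b * (N^3 * b * CP0)" using ka[of "riesz_proj c0 r0 (diag_mat \<alpha> + E)"] z K1pos b0
        by (meson mult_left_mono order_trans zero_le_mult_iff)
      also have "\<dots> = (K1 * N^3 * CP0) * b^2" by (simp add: power2_eq_square mult_ac)
      also have "\<dots> \<le> C * b^2" unfolding C_def using K1pos by (intro mult_right_mono) auto
      finally show ?thesis .
    qed
    show "norm (riesz_proj c1 r1 (diag_mat \<alpha> + E) ** Z ** riesz_proj c1 r1 (diag_mat \<alpha> + E)) \<le> C * b ^ 3"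
    proof -
      have "norm (riesz_proj c1 r1 (diag_mat \<alpha> + E) ** Z ** riesz_proj c1 r1 (diag_mat \<alpha> + E))
          \<le> K1 * b * (K1 * b * b)" using ka[of "riesz_proj c1 r1 (diag_mat \<alpha> + E)"] kb K1pos b0
        by (meson mult_left_mono order_trans zero_le_mult_iff)
      also have "\<dots> = (K1 * K1) * b^3" by (simp add: power3_eq_cube mult_ac)
      also have "\<dots> \<le> C * b^3" unfolding C_def using K1pos N1 CP0pos b0 by (intro mult_right_mono) auto
      finally show ?thesis .
    qed
  qed
qed

end
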